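(* Let $k\geq 3$ be an odd integer and let $n\geq 2$. Then the integer $k$-matching preclusion number of the complete graph $K_n$ is $$mp^{k}(K_n)=\begin{cases} n-2, & n\in\{3,5\},\\ n-1, & \text{otherwise}.\end{cases}$$
   Context: All graphs are finite, simple and undirected; $\Gamma(v)$ is the set of edges incident with $v$. For a positive integer $k$, an integer $k$-matching of $G$ is a function $h:E(G)\to\{0,1,\dots,k\}$ with $\sum_{e\in\Gamma(v)}h(e)\leq k$ for all $v\in V(G)$. It is perfect if $\sum_{e\in\Gamma(v)}h(e)=k$ for every vertex $v$, and almost perfect if there is exactly one vertex $v'$ with $\sum_{e\in\Gamma(v')}h(e)=k-1$ and $\sum_{e\in\Gamma(v)}h(e)=k$ for all other vertices $v$. An edge set $F\subseteq E(G)$ is an integer $k$-matching preclusion set if $G-F$ has neither a perfect integer $k$-matching nor an almost perfect integer $k$-matching; $mp^{k}(G)$ is the minimum size of such a set. *)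

theory Defs
  imports Main
begin

text \<open>A finite simple graph is given by a vertex set V and an edge set E of
two-element subsets of V. Edge functions are functions on sets of vertices;
only their values on edges matter.\<close>

definition simple_graph :: "'a set \<Rightarrow> 'a set set \<Rightarrow> bool" where
  "simple_graph V E \<longleftrightarrow> finite V \<and> (\<forall>e\<in>E. \<exists>u v. u \<in> V \<and> v \<in> V \<and> u \<noteq> v \<and> e = {u, v})"

definition incident :: "'a set set \<Rightarrow> 'a \<Rightarrow> 'a set set" where
  "incident E v = {e \<in> E. v \<in> e}"

definition int_matching :: "nat \<Rightarrow> 'a set \<Rightarrow> 'a set set \<Rightarrow> ('a set \<Rightarrow> nat) \<Rightarrow> bool" where
  "int_matching k V E h \<longleftrightarrow> (\<forall>e\<in>E. h e \<le> k) \<and> (\<forall>v\<in>V. (\<Sum>e\<in>incident E v. h e) \<le> k)"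

definition perfect_int_matching :: "nat \<Rightarrow> 'a set \<Rightarrow> 'a set set \<Rightarrow> ('a set \<Rightarrow> nat) \<Rightarrow> bool" where
  "perfect_int_matching k V E h \<longleftrightarrow> int_matching k V E h \<and> (\<forall>v\<in>V. (\<Sum>e\<in>incident E v. h e) = k)"

definition almost_perfect_int_matching :: "nat \<Rightarrow> 'a set \<Rightarrow> 'a set set \<Rightarrow> ('a set \<Rightarrow> nat) \<Rightarrow> bool" where
  "almost_perfect_int_matching k V E h \<longleftrightarrow> int_matching k V E h \<and>
     (\<exists>!v'. v' \<in> V \<and> (\<Sum>e\<in>incident E v'. h e) = k - 1) \<and>
     (\<forall>v\<in>V. (\<Sum>e\<in>incident E v. h e) = k \<or> (\<Sum>e\<in>incident E v. h e) = k - 1)"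

definition int_matching_preclusion_set :: "nat \<Rightarrow> 'a set \<Rightarrow> 'a set set \<Rightarrow> 'a set set \<Rightarrow> bool" where
  "int_matching_preclusion_set k V E F \<longleftrightarrow> F \<subseteq> E \<and>
     \<not> (\<exists>h. perfect_int_matching k V (E - F) h) \<and>
     \<not> (\<exists>h. almost_perfect_int_matching k V (E - F) h)"

definition mp :: "nat \<Rightarrow> 'a set \<Rightarrow> 'a set set \<Rightarrow> nat" where
  "mp k V E = (LEAST m. \<exists>F. int_matching_preclusion_set k V E F \<and> card F = m)"

definition complete_edges :: "'a set \<Rightarrow> 'a set set" where
  "complete_edges V = {e. \<exists>u v. u \<in> V \<and> v \<in> V \<and> u \<noteq> v \<and> e = {u, v}}"

end

theory Submission
  imports Defs
begin



lemma ce_mem: "e \<in> complete_edges W \<longleftrightarrow> (\<exists>u v. u\<in>W \<and> v\<in>W \<and> u\<noteq>v \<and> e={u,v})"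
  by (simp add: complete_edges_def)

lemma ce_sub_Pow: "complete_edges W \<subseteq> Pow W"
  by (auto simp: complete_edges_def)

lemma finite_ce: "finite W \<Longrightarrow> finite (complete_edges W)"
  by (rule finite_subset[OF ce_sub_Pow]) simp

lemma ce_card: "e \<in> complete_edges W \<Longrightarrow> card e = 2"
  by (auto simp: complete_edges_def)

lemma ce_mono: "A \<subseteq> B \<Longrightarrow> complete_edges A \<subseteq> complete_edges B"
  by (auto simp: complete_edges_def)

lemma ce_diff: "e \<in> complete_edges (W - {u,v}) \<Longrightarrow> u \<notin> e \<and> v \<notin> e"
  by (auto simp: complete_edges_def)

lemma ce_pair: "u \<in> W \<Longrightarrow> v \<in> W \<Longrightarrow> u \<noteq> v \<Longrightarrow> {u,v} \<in> complete_edges W"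
  by (auto simp: complete_edges_def)

lemma exists_nonnb:
  assumes "finite W" "x \<in> W" "card (F \<inter> complete_edges W) + 2 \<le> card W"
  shows "\<exists>y\<in>W. y \<noteq> x \<and> {x,y} \<notin> F"
proof (rule ccontr)
  assume "\<not> ?thesis"
  hence sub: "(\<lambda>y. {x,y}) ` (W - {x}) \<subseteq> F \<inter> complete_edges W"
    using assms(2) by (auto simp: complete_edges_def)
  have inj: "inj_on (\<lambda>y. {x,y}) (W - {x})" by (auto simp: inj_on_def doubleton_eq_iff)
  have "card (W - {x}) \<le> card (F \<inter> complete_edges W)"
    using card_inj_on_le[OF inj sub] finite_ce[OF assms(1)] by auto
  moreover have "card (W - {x}) = card W - 1" using assms by simp
  ultimately show False using assms(3) by linarith
qed

lemma cover_bound: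
  assumes "finite W" "S \<subseteq> F \<inter> complete_edges W" "\<forall>e\<in>S. u \<in> e \<or> v \<in> e"
  shows "card (F \<inter> complete_edges (W - {u,v})) + card S \<le> card (F \<inter> complete_edges W)"
proof -
  have fin: "finite (F \<inter> complete_edges W)" using finite_ce[OF assms(1)] by auto
  have "F \<inter> complete_edges (W - {u,v}) \<subseteq> (F \<inter> complete_edges W) - S"
    using ce_mono[of "W - {u,v}" W] ce_diff[of _ W u v] assms(3) by blast
  hence "card (F \<inter> complete_edges (W - {u,v})) \<le> card ((F \<inter> complete_edges W) - S)"
    using fin by (intro card_mono) auto
  also have "\<dots> = card (F \<inter> complete_edges W) - card S"
    using fin assms(2) finite_subset[OF assms(2) fin] by (intro card_Diff_subset) auto
  finally show ?thesis using card_mono[OF fin assms(2)] by linarith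
qed

lemma ce_elem_with:
  assumes "e \<in> complete_edges W" "x \<in> e"
  shows "\<exists>p. e = {x,p} \<and> p \<noteq> x \<and> p \<in> W \<and> x \<in> W"
  using assms by (auto simp: complete_edges_def)

lemma two_elems:
  assumes "finite W" "card W \<ge> 2"
  shows "\<exists>u v. u \<in> W \<and> v \<in> W \<and> u \<noteq> v"
proof -
  obtain u where u: "u \<in> W" using assms by fastforce
  have "card (W - {u}) \<ge> 1" using assms u by simp
  then obtain v where "v \<in> W - {u}" by (metis card.empty ex_in_conv not_one_le_zero)
  thus ?thesis using u by blast
qed

lemma pair_step:
  assumes fin: "finite W" and le: "card (F \<inter> complete_edges W) + 2 \<le> card W"
  shows "\<exists>u\<in>W. \<exists>v\<in>W. u \<noteq> v \<and> {u,v} \<notin> F \<and>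
    (card (F \<inter> complete_edges (W - {u,v})) + 2 \<le> card (F \<inter> complete_edges W)
     \<or> F \<inter> complete_edges (W - {u,v}) = {})"
proof -
  let ?FW = "F \<inter> complete_edges W"
  show ?thesis
  proof (cases "?FW = {}")
    case True
    obtain u v where uv: "u \<in> W" "v \<in> W" "u \<noteq> v"
      using two_elems[OF fin] le by fastforce
    have "{u,v} \<notin> F" using True ce_pair[OF uv] by blast
    moreover have "F \<inter> complete_edges (W - {u,v}) = {}"
      using True ce_mono[of "W - {u,v}" W] by blast
    ultimately show ?thesis using uv by blast
  next
    case ne: False
    show ?thesis
    proof (cases "\<exists>x e1 e2. e1 \<in> ?FW \<and> e2 \<in> ?FW \<and> e1 \<noteq> e2 \<and> x \<in> e1 \<and> x \<in> e2")
      case True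
      then obtain x e1 e2 where e: "e1 \<in> ?FW" "e2 \<in> ?FW" "e1 \<noteq> e2" "x \<in> e1" "x \<in> e2" by blast
      have xW: "x \<in> W" using e ce_sub_Pow by blast
      obtain y where y: "y \<in> W" "y \<noteq> x" "{x,y} \<notin> F" using exists_nonnb[OF fin xW le] by blast
      have "card ?FW \<ge> 0" by simp
      have "card (F \<inter> complete_edges (W - {x,y})) + card {e1,e2} \<le> card ?FW"
        using cover_bound[OF fin, of "{e1,e2}" F x y] e by blast
      hence "card (F \<inter> complete_edges (W - {x,y})) + 2 \<le> card ?FW" using e by simp
      thus ?thesis using xW y by (metis insert_commute)
    next
      case nt: False
      have nt': "\<And>x e1 e2. e1 \<in> ?FW \<Longrightarrow> e2 \<in> ?FW \<Longrightarrow> x \<in> e1 \<Longrightarrow> x \<in> e2 \<Longrightarrow> e1 = e2"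
        using nt by blast
      obtain e1 where e1: "e1 \<in> ?FW" using ne by blast
      then obtain a b where ab: "a \<in> W" "b \<in> W" "a \<noteq> b" "e1 = {a,b}" by (auto simp: complete_edges_def)
      show ?thesis
      proof (cases "?FW = {e1}")
        case True
        have "card ?FW = 1" using True by simp
        hence "card W \<ge> 3" using le by simp
        have "card (W - {a,b}) \<ge> 1"
        proof -
          have "card (W - {a,b}) = card W - 2" using ab fin by (subst card_Diff_subset) auto
          thus ?thesis using \<open>card W \<ge> 3\<close> by simp
        qed
        then obtain c where c: "c \<in> W - {a,b}"
          by (metis card.empty ex_in_conv not_one_le_zero)
        hence c: "c \<in> W" "c \<noteq> a" "c \<noteq> b" by auto
        have "{a,c} \<notin> F"
        proof
          assume "{a,c} \<in> F"
          hence "{a,c} \<in> ?FW" using ce_pair[OF ab(1) c(1)] c by auto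
          hence "{a,c} = {a,b}" using True ab(4) by simp
          thus False using c by (auto simp: doubleton_eq_iff)
        qed
        moreover have "F \<inter> complete_edges (W - {a,c}) = {}"
        proof -
          have "F \<inter> complete_edges (W - {a,c}) \<subseteq> ?FW" using ce_mono[of "W - {a,c}" W] by auto
          moreover have "e1 \<notin> complete_edges (W - {a,c})" using ce_diff[of e1 W a c] ab(4) by auto
          ultimately show ?thesis using True by auto
        qed
        ultimately show ?thesis using ab(1) c(1,2) by (intro bexI[of _ a] bexI[of _ c]) auto
      next
        case False
        then obtain e2 where e2: "e2 \<in> ?FW" "e2 \<noteq> e1" using e1 by blast
        then obtain c d where cd: "c \<in> W" "d \<in> W" "c \<noteq> d" "e2 = {c,d}" by (auto simp: complete_edges_def)
        have "a \<notin> e2"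
        proof
          assume "a \<in> e2"
          moreover have "a \<in> e1" using ab(4) by simp
          ultimately have "e1 = e2" using nt'[OF e1 e2(1)] by blast
          thus False using e2 by simp
        qed
        hence ca: "c \<noteq> a" using cd by auto
        have "{a,c} \<notin> F"
        proof
          assume "{a,c} \<in> F"
          hence "{a,c} \<in> ?FW" using ce_pair[OF ab(1) cd(1)] ca by auto
          hence "{a,c} = e1" using nt'[OF _ e1, of "{a,c}" a] ab(4) by simp
          hence "c \<in> e1" by auto
          hence "e1 = e2" using nt'[OF e1 e2(1), of c] cd(4) by simp
          thus False using e2 by simp
        qed
        moreover have "card (F \<inter> complete_edges (W - {a,c})) + card {e1,e2} \<le> card ?FW"
          using cover_bound[OF fin, of "{e1,e2}" F a c] e1 e2(1) ab(4) cd(4) by simp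
        moreover have "card {e1,e2} = 2" using e2 by simp
        ultimately show ?thesis using ab(1) cd(1) ca by (intro bexI[of _ a] bexI[of _ c]) auto
      qed
    qed
  qed
qed




lemma pair_step3:
  assumes fin: "finite W" and c7: "card W \<ge> 7" and eq: "card (F \<inter> complete_edges W) + 2 = card W"
  shows "\<exists>u\<in>W. \<exists>v\<in>W. u \<noteq> v \<and> {u,v} \<notin> F \<and>
    card (F \<inter> complete_edges (W - {u,v})) + 3 \<le> card (F \<inter> complete_edges W)"
proof -
  let ?FW = "F \<inter> complete_edges W"
  have le: "card ?FW + 2 \<le> card W" using eq by simp
  have finF: "finite ?FW" using finite_ce[OF fin] by simp
  consider (a) "\<exists>x e1 e2 e3. e1\<in>?FW \<and> e2\<in>?FW \<and> e3\<in>?FW \<and> e1\<noteq>e2 \<and> e1\<noteq>e3 \<and> e2\<noteq>e3 \<and> x\<in>e1 \<and> x\<in>e2 \<and> x\<in>e3"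
    | (b) "\<not> (\<exists>x e1 e2 e3. e1\<in>?FW \<and> e2\<in>?FW \<and> e3\<in>?FW \<and> e1\<noteq>e2 \<and> e1\<noteq>e3 \<and> e2\<noteq>e3 \<and> x\<in>e1 \<and> x\<in>e2 \<and> x\<in>e3)"
          "\<exists>x e1 e2. e1\<in>?FW \<and> e2\<in>?FW \<and> e1\<noteq>e2 \<and> x\<in>e1 \<and> x\<in>e2"
    | (c) "\<forall>x e1 e2. e1\<in>?FW \<longrightarrow> e2\<in>?FW \<longrightarrow> x\<in>e1 \<longrightarrow> x\<in>e2 \<longrightarrow> e1=e2"
    by blast
  then show ?thesis
  proof cases
    case a
    then obtain x e1 e2 e3 where e: "e1\<in>?FW" "e2\<in>?FW" "e3\<in>?FW" "e1\<noteq>e2" "e1\<noteq>e3" "e2\<noteq>e3"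
      "x\<in>e1" "x\<in>e2" "x\<in>e3" by blast
    have xW: "x \<in> W" using e(1,7) ce_sub_Pow by blast
    obtain y where y: "y \<in> W" "y \<noteq> x" "{x,y} \<notin> F" using exists_nonnb[OF fin xW le] by blast
    have "card (F \<inter> complete_edges (W - {x,y})) + card {e1,e2,e3} \<le> card ?FW"
      using cover_bound[OF fin, of "{e1,e2,e3}" F x y] e by blast
    moreover have "card {e1,e2,e3} = 3" using e by simp
    ultimately show ?thesis using xW y by (intro bexI[of _ x] bexI[of _ y]) auto
  next
    case b
    obtain x e1 e2 where e: "e1\<in>?FW" "e2\<in>?FW" "e1\<noteq>e2" "x\<in>e1" "x\<in>e2" using b(2) by blast
    have noa: "\<And>e. e \<in> ?FW \<Longrightarrow> x \<in> e \<Longrightarrow> e = e1 \<or> e = e2"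
      using b(1) e by blast
    obtain p where p: "e1 = {x,p}" "p \<noteq> x" "p \<in> W" "x \<in> W" using ce_elem_with[of e1 W x] e by blast
    obtain q where q: "e2 = {x,q}" "q \<noteq> x" "q \<in> W" using ce_elem_with[of e2 W x] e by blast
    have "card (?FW - {e1,e2}) = card ?FW - 2"
      using e finF by (subst card_Diff_subset) auto
    hence "card (?FW - {e1,e2}) \<ge> 2" using eq c7 by simp
    then obtain e3 e4 where e34: "e3 \<in> ?FW - {e1,e2}" "e4 \<in> ?FW - {e1,e2}" "e3 \<noteq> e4"
      using two_elems[of "?FW - {e1,e2}"] finF by blast
    have x34: "x \<notin> e3" "x \<notin> e4" using noa e34 by blast+
    have c3: "card e3 = 2" and c4: "card e4 = 2" using ce_card e34 by blast+
    have cpq: "card {p,q} \<le> 2" by (simp add: card_insert_le_m1)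
    have "\<not> (e3 \<subseteq> {p,q} \<and> e4 \<subseteq> {p,q})"
    proof
      assume h: "e3 \<subseteq> {p,q} \<and> e4 \<subseteq> {p,q}"
      have "card e3 \<le> card {p,q}" using h by (intro card_mono) auto
      hence "card {p,q} = 2" using c3 cpq by simp
      hence "e3 = {p,q}" "e4 = {p,q}" using h c3 c4 card_subset_eq[of "{p,q}" e3] card_subset_eq[of "{p,q}" e4] by auto
      thus False using e34 by simp
    qed
    then obtain e y where ey: "e \<in> ?FW" "e \<noteq> e1" "e \<noteq> e2" "x \<notin> e" "y \<in> e" "y \<noteq> p" "y \<noteq> q"
      using e34 x34 by blast
    have yW: "y \<in> W" using ey ce_sub_Pow by blast
    have yx: "y \<noteq> x" using ey by auto
    have nF: "{x,y} \<notin> F"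
    proof
      assume "{x,y} \<in> F"
      hence "{x,y} \<in> ?FW" using ce_pair[OF p(4) yW] yx by auto
      hence "{x,y} = e1 \<or> {x,y} = e2" using noa by simp
      thus False using p q ey yx by (auto simp: doubleton_eq_iff)
    qed
    have "card (F \<inter> complete_edges (W - {x,y})) + card {e1,e2,e} \<le> card ?FW"
      using cover_bound[OF fin, of "{e1,e2,e}" F x y] e ey by blast
    moreover have "card {e1,e2,e} = 3" using e ey by simp
    ultimately show ?thesis using p(4) yW yx nF by (intro bexI[of _ x] bexI[of _ y]) auto
  next
    case c
    have pw: "pairwise disjnt ?FW"
      unfolding pairwise_def disjnt_def using c by blast
    have "card (\<Union>?FW) = sum card ?FW"
      using card_Union_disjoint[OF pw] ce_card by (metis card.infinite IntD2 zero_neq_numeral)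
    also have "\<dots> = sum (\<lambda>_. 2) ?FW" using ce_card by (intro sum.cong) auto
    also have "\<dots> = 2 * card ?FW" by simp
    finally have "2 * card ?FW = card (\<Union>?FW)" by simp
    also have "\<dots> \<le> card W" using fin ce_sub_Pow by (intro card_mono) auto
    finally show ?thesis using eq c7 by simp
  qed
qed

definition partner :: "'a set \<Rightarrow> 'a set set \<Rightarrow> ('a \<Rightarrow> 'a) \<Rightarrow> bool" where
  "partner W F p \<longleftrightarrow> (\<forall>v\<in>W. p v \<in> W \<and> p v \<noteq> v \<and> p (p v) = v \<and> {v, p v} \<notin> F)"

lemma partner_empty: "partner {} F p" by (simp add: partner_def)

lemma partner_extend:
  assumes "partner X F p" "u \<notin> X" "v \<notin> X" "u \<noteq> v" "{u,v} \<notin> F"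
  shows "partner (insert u (insert v X)) F (p(u:=v, v:=u))"
  unfolding partner_def
proof
  fix w assume w: "w \<in> insert u (insert v X)"
  show "(p(u:=v, v:=u)) w \<in> insert u (insert v X) \<and> (p(u:=v, v:=u)) w \<noteq> w \<and>
    (p(u:=v, v:=u)) ((p(u:=v, v:=u)) w) = w \<and> {w, (p(u:=v, v:=u)) w} \<notin> F"
  proof (cases "w = u")
    case True thus ?thesis using assms by auto
  next
    case wu: False
    show ?thesis
    proof (cases "w = v")
      case True thus ?thesis using assms by (auto simp: insert_commute)
    next
      case False
      hence wX: "w \<in> X" using w wu by auto
      hence "p w \<in> X" "p w \<noteq> w" "p (p w) = w" "{w, p w} \<notin> F" using assms(1) by (auto simp: partner_def)
      moreover have "p w \<noteq> u" "p w \<noteq> v" using \<open>p w \<in> X\<close> assms by auto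
      ultimately show ?thesis using wu False by auto
    qed
  qed
qed

lemma card_minus2:
  assumes "finite W" "u \<in> W" "v \<in> W" "u \<noteq> v"
  shows "card (W - {u,v}) = card W - 2"
  using assms by (subst card_Diff_subset) auto

lemma insert_back: "u \<in> W \<Longrightarrow> v \<in> W \<Longrightarrow> insert u (insert v (W - {u,v})) = W" by auto

lemma pm:
  "finite W \<Longrightarrow> even (card W) \<Longrightarrow> card (F \<inter> complete_edges W) + 2 \<le> card W \<or> W = {} \<Longrightarrow> \<exists>p. partner W F p"
proof (induction "card W" arbitrary: W rule: less_induct)
  case less
  show ?case
  proof (cases "W = {}")
    case True thus ?thesis using partner_empty by blast
  next
    case False
    hence le: "card (F \<inter> complete_edges W) + 2 \<le> card W" using less.prems(3) by simp
    obtain u v where uv: "u \<in> W" "v \<in> W" "u \<noteq> v" "{u,v} \<notin> F"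
      and dis: "card (F \<inter> complete_edges (W - {u,v})) + 2 \<le> card (F \<inter> complete_edges W)
     \<or> F \<inter> complete_edges (W - {u,v}) = {}"
      using pair_step[OF less.prems(1) le] by blast
    let ?W' = "W - {u,v}"
    have cW: "card ?W' = card W - 2" by (rule card_minus2[OF less.prems(1) uv(1-3)])
    have c2: "card W \<ge> 2" using le by simp
    have ev: "even (card ?W')" using cW less.prems(2) c2 by simp
    have fin': "finite ?W'" using less.prems(1) by simp
    have "card (F \<inter> complete_edges ?W') + 2 \<le> card ?W' \<or> ?W' = {}"
    proof (cases "?W' = {}")
      case False
      hence "card ?W' \<noteq> 0" using fin' by simp
      hence "card ?W' \<ge> 2" using ev by presburger
      show ?thesis
      proof (cases "F \<inter> complete_edges ?W' = {}")
        case True thus ?thesis using \<open>card ?W' \<ge> 2\<close> by simp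
      next
        case False thus ?thesis using dis cW le by linarith
      qed
    qed simp
    moreover have lt: "card ?W' < card W" using cW c2 by simp
    ultimately obtain p where "partner ?W' F p" using less(1)[OF lt fin' ev] by blast
    moreover have "u \<notin> ?W'" "v \<notin> ?W'" by auto
    ultimately have "partner (insert u (insert v ?W')) F (p(u:=v, v:=u))"
      using partner_extend[OF _ _ _ uv(3,4)] by blast
    thus ?thesis using insert_back[OF uv(1,2)] by auto
  qed
qed

definition tri_pm :: "'a set \<Rightarrow> 'a set set \<Rightarrow> bool" where
  "tri_pm W F \<longleftrightarrow> (\<exists>a b c p. a\<in>W \<and> b\<in>W \<and> c\<in>W \<and> a\<noteq>b \<and> a\<noteq>c \<and> b\<noteq>c \<and>
     {a,b}\<notin>F \<and> {a,c}\<notin>F \<and> {b,c}\<notin>F \<and> partner (W - {a,b,c}) F p)"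

lemma tri_pm_extend:
  assumes "tri_pm (W - {u,v}) F" "u \<in> W" "v \<in> W" "u \<noteq> v" "{u,v} \<notin> F"
  shows "tri_pm W F"
proof -
  from assms(1) obtain a b c p where t: "a\<in>W - {u,v}" "b\<in>W - {u,v}" "c\<in>W - {u,v}" "a\<noteq>b" "a\<noteq>c" "b\<noteq>c"
     "{a,b}\<notin>F" "{a,c}\<notin>F" "{b,c}\<notin>F" and pp: "partner (W - {u,v} - {a,b,c}) F p"
    unfolding tri_pm_def by metis
  have "u \<notin> W - {u,v} - {a,b,c}" "v \<notin> W - {u,v} - {a,b,c}" by simp_all
  hence "partner (insert u (insert v (W - {u,v} - {a,b,c}))) F (p(u:=v, v:=u))"
    using partner_extend[OF pp _ _ assms(4,5)] by simp
  moreover have "insert u (insert v (W - {u,v} - {a,b,c})) = W - {a,b,c}"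
  proof -
    have "u \<notin> {a,b,c}" "v \<notin> {a,b,c}" using t(1-3) by auto
    thus ?thesis using assms(2,3) by blast
  qed
  ultimately have pq: "partner (W - {a,b,c}) F (p(u:=v, v:=u))" by simp
  have abc: "a \<in> W" "b \<in> W" "c \<in> W" using t(1-3) by simp_all
  show ?thesis unfolding tri_pm_def
    using abc t(4-9) pq by blast
qed

lemma tri:
  "finite W \<Longrightarrow> odd (card W) \<Longrightarrow> card (F \<inter> complete_edges W) + 3 \<le> card W \<Longrightarrow> tri_pm W F"
proof (induction "card W" arbitrary: W rule: less_induct)
  case less
  show ?case
  proof (cases "card W = 3")
    case True
    then obtain a b c where abc: "W = {a,b,c}" "a\<noteq>b" "b\<noteq>c" "a\<noteq>c" by (auto simp: card_3_iff)
    have "F \<inter> complete_edges W = {}" using less.prems(3) True finite_ce[OF less.prems(1)] by simp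
    moreover have "{a,b} \<in> complete_edges W" "{a,c} \<in> complete_edges W" "{b,c} \<in> complete_edges W"
      using ce_pair[of a W b] ce_pair[of a W c] ce_pair[of b W c] abc by auto
    ultimately have "{a,b} \<notin> F" "{a,c} \<notin> F" "{b,c} \<notin> F" by blast+
    moreover have "W - {a,b,c} = {}" using abc by simp
    ultimately show ?thesis unfolding tri_pm_def using abc partner_empty
      by (intro exI[of _ a] exI[of _ b] exI[of _ c]) auto
  next
    case False
    have c5: "card W \<ge> 5" using less.prems(2,3) False by presburger
    have le: "card (F \<inter> complete_edges W) + 2 \<le> card W" using less.prems(3) by simp
    obtain u v where uv: "u \<in> W" "v \<in> W" "u \<noteq> v" "{u,v} \<notin> F"
      and dis: "card (F \<inter> complete_edges (W - {u,v})) + 2 \<le> card (F \<inter> complete_edges W)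
     \<or> F \<inter> complete_edges (W - {u,v}) = {}"
      using pair_step[OF less.prems(1) le] by blast
    let ?W' = "W - {u,v}"
    have cW: "card ?W' = card W - 2" by (rule card_minus2[OF less.prems(1) uv(1-3)])
    have ev: "odd (card ?W')" using cW less.prems(2) c5 by simp
    have fin': "finite ?W'" using less.prems(1) by simp
    have "card (F \<inter> complete_edges ?W') + 3 \<le> card ?W'"
    proof (cases "F \<inter> complete_edges ?W' = {}")
      case True thus ?thesis using cW c5 by simp
    next
      case False thus ?thesis using dis cW less.prems(3) c5 by linarith
    qed
    moreover have lt: "card ?W' < card W" using cW c5 by simp
    ultimately have "tri_pm ?W' F" using less(1)[OF lt fin' ev] by blast
    thus ?thesis by (rule tri_pm_extend[OF _ uv])
  qed
qed

lemma tri7: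
  assumes "finite W" "odd (card W)" "card W \<ge> 7" "card (F \<inter> complete_edges W) + 2 \<le> card W"
  shows "tri_pm W F"
proof (cases "card (F \<inter> complete_edges W) + 3 \<le> card W")
  case True show ?thesis by (rule tri[OF assms(1,2) True])
next
  case False
  hence eq: "card (F \<inter> complete_edges W) + 2 = card W" using assms(4) by simp
  obtain u v where uv: "u \<in> W" "v \<in> W" "u \<noteq> v" "{u,v} \<notin> F"
      and dis: "card (F \<inter> complete_edges (W - {u,v})) + 3 \<le> card (F \<inter> complete_edges W)"
    using pair_step3[OF assms(1,3) eq] by blast
  let ?W' = "W - {u,v}"
  have cW: "card ?W' = card W - 2" by (rule card_minus2[OF assms(1) uv(1-3)])
  have "finite ?W'" "odd (card ?W')" "card (F \<inter> complete_edges ?W') + 3 \<le> card ?W'"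
    using assms cW dis eq by auto
  hence "tri_pm ?W' F" by (rule tri)
  thus ?thesis by (rule tri_pm_extend[OF _ uv])
qed




lemma inc_image:
  assumes "x \<in> V"
  shows "incident (complete_edges V - F) x = (\<lambda>w. {x,w}) ` {w\<in>V. w \<noteq> x \<and> {x,w} \<notin> F}"
proof
  show "incident (complete_edges V - F) x \<subseteq> (\<lambda>w. {x,w}) ` {w\<in>V. w \<noteq> x \<and> {x,w} \<notin> F}"
  proof
    fix e assume "e \<in> incident (complete_edges V - F) x"
    hence e: "e \<in> complete_edges V" "e \<notin> F" "x \<in> e" by (auto simp: incident_def)
    then obtain w where "e = {x,w}" "w \<noteq> x" "w \<in> V" using ce_elem_with[OF e(1,3)] by blast
    thus "e \<in> (\<lambda>w. {x,w}) ` {w\<in>V. w \<noteq> x \<and> {x,w} \<notin> F}" using e(2) by blast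
  qed
next
  show "(\<lambda>w. {x,w}) ` {w\<in>V. w \<noteq> x \<and> {x,w} \<notin> F} \<subseteq> incident (complete_edges V - F) x"
    using assms by (auto simp: incident_def intro!: ce_pair)
qed

lemma sum_inc:
  assumes "x \<in> V"
  shows "(\<Sum>e\<in>incident (complete_edges V - F) x. h e) = (\<Sum>w\<in>{w\<in>V. w \<noteq> x \<and> {x,w} \<notin> F}. h {x,w})"
proof -
  have "inj_on (\<lambda>w. {x,w}) {w\<in>V. w \<noteq> x \<and> {x,w} \<notin> F}"
    by (auto simp: inj_on_def doubleton_eq_iff)
  thus ?thesis unfolding inc_image[OF assms] by (simp add: sum.reindex)
qed

lemma sum_nb:
  assumes "finite V" "S \<subseteq> {w\<in>V. w \<noteq> x \<and> {x,w} \<notin> F}"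
    "\<And>w. w \<in> V \<Longrightarrow> w \<noteq> x \<Longrightarrow> w \<notin> S \<Longrightarrow> h {x,w} = 0"
  shows "(\<Sum>w\<in>{w\<in>V. w \<noteq> x \<and> {x,w} \<notin> F}. h {x,w}) = (\<Sum>w\<in>S. h {x,w})"
  using assms by (intro sum.mono_neutral_right) auto

lemma perfect_from_partner:
  assumes fin: "finite V" and pp: "partner V F p"
  shows "\<exists>h. perfect_int_matching k V (complete_edges V - F) h"
proof -
  define h where "h = (\<lambda>e. if \<exists>w\<in>V. e = {w, p w} then k else 0)"
  have s: "(\<Sum>e\<in>incident (complete_edges V - F) v. h e) = k" if v: "v \<in> V" for v
  proof -
    have pv: "p v \<in> V" "p v \<noteq> v" "p (p v) = v" "{v, p v} \<notin> F" using pp v by (auto simp: partner_def)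
    have "(\<Sum>e\<in>incident (complete_edges V - F) v. h e) = (\<Sum>w\<in>{w\<in>V. w \<noteq> v \<and> {v,w} \<notin> F}. h {v,w})"
      by (rule sum_inc[OF v])
    also have "\<dots> = (\<Sum>w\<in>{p v}. h {v,w})"
    proof (rule sum_nb[OF fin])
      show "{p v} \<subseteq> {w \<in> V. w \<noteq> v \<and> {v, w} \<notin> F}" using pv by auto
    next
      fix w assume w: "w \<in> V" "w \<noteq> v" "w \<notin> {p v}"
      have "\<not> (\<exists>u\<in>V. {v,w} = {u, p u})"
      proof
        assume "\<exists>u\<in>V. {v,w} = {u, p u}"
        then obtain u where u: "u \<in> V" "{v,w} = {u, p u}" by blast
        hence "(v = u \<and> w = p u) \<or> (v = p u \<and> w = u)" by (auto simp: doubleton_eq_iff)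
        moreover have "p (p u) = u" using pp u(1) by (auto simp: partner_def)
        ultimately show False using w by auto
      qed
      thus "h {v,w} = 0" unfolding h_def by simp
    qed
    also have "\<dots> = k" unfolding h_def using v by auto
    finally show ?thesis .
  qed
  have "perfect_int_matching k V (complete_edges V - F) h"
    unfolding perfect_int_matching_def int_matching_def using s by (auto simp: h_def)
  thus ?thesis by blast
qed

lemma odd_half:
  assumes "odd (k::nat)"
  shows "(k-1) div 2 + (k-1) div 2 = k - 1" "(k-1) div 2 + (k+1) div 2 = k"
  using assms by (auto elim!: oddE)

lemma almost_from_tri:
  assumes fin: "finite V" and tp: "tri_pm V F" and k: "odd k" "k \<ge> 3"
  shows "\<exists>h. almost_perfect_int_matching k V (complete_edges V - F) h"
proof -
  obtain a b c p where t: "a\<in>V" "b\<in>V" "c\<in>V" "a\<noteq>b" "a\<noteq>c" "b\<noteq>c"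
     "{a,b}\<notin>F" "{a,c}\<notin>F" "{b,c}\<notin>F" and pp: "partner (V - {a,b,c}) F p"
    using tp unfolding tri_pm_def by metis
  define h where "h = (\<lambda>e. if e = {a,b} \<or> e = {a,c} then (k-1) div 2 else if e = {b,c} then (k+1) div 2
     else if \<exists>w\<in>V-{a,b,c}. e = {w, p w} then k else 0)"
  let ?N = "\<lambda>x. {w\<in>V. w \<noteq> x \<and> {x,w} \<notin> F}"
  have Mnot: "\<And>u x. u \<in> V - {a,b,c} \<Longrightarrow> x \<in> {a,b,c} \<Longrightarrow> x \<notin> {u, p u}"
    using pp by (auto simp: partner_def)
  have hab: "h {a,b} = (k-1) div 2" "h {b,a} = (k-1) div 2" unfolding h_def by (simp_all add: insert_commute)
  have hac: "h {a,c} = (k-1) div 2" "h {c,a} = (k-1) div 2" unfolding h_def by (simp_all add: insert_commute)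
  have nbc: "{b,c} \<noteq> {a,b}" "{b,c} \<noteq> {a,c}" using t(4-6) by (simp_all add: doubleton_eq_iff)
  have hbc: "h {b,c} = (k+1) div 2" "h {c,b} = (k+1) div 2" unfolding h_def using nbc by (simp_all add: insert_commute)
  have zero: "h {x,w} = 0" if "x \<noteq> w" "\<not> (\<exists>u\<in>V-{a,b,c}. {x,w} = {u, p u})"
     "{x,w} \<noteq> {a,b}" "{x,w} \<noteq> {a,c}" "{x,w} \<noteq> {b,c}" for x w
    unfolding h_def using that by simp
  have sa: "(\<Sum>w\<in>?N a. h {a,w}) = k - 1"
  proof -
    have "(\<Sum>w\<in>?N a. h {a,w}) = (\<Sum>w\<in>{b,c}. h {a,w})"
    proof (rule sum_nb[OF fin])
      show "{b,c} \<subseteq> ?N a" using t by auto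
    next
      fix w assume w: "w \<in> V" "w \<noteq> a" "w \<notin> {b,c}"
      have "\<not> (\<exists>u\<in>V-{a,b,c}. {a,w} = {u, p u})" using Mnot[of _ a] by blast
      moreover have "{a,w} \<noteq> {a,b}" "{a,w} \<noteq> {a,c}" "{a,w} \<noteq> {b,c}" using w t by (simp_all add: doubleton_eq_iff)
      ultimately show "h {a,w} = 0" using zero w(2) by metis
    qed
    also have "\<dots> = k - 1" using t(6) hab hac odd_half[OF k(1)] by simp
    finally show ?thesis .
  qed
  have sb: "(\<Sum>w\<in>?N b. h {b,w}) = k"
  proof -
    have "(\<Sum>w\<in>?N b. h {b,w}) = (\<Sum>w\<in>{a,c}. h {b,w})"
    proof (rule sum_nb[OF fin])
      show "{a,c} \<subseteq> ?N b" using t by (auto simp: insert_commute)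
    next
      fix w assume w: "w \<in> V" "w \<noteq> b" "w \<notin> {a,c}"
      have "\<not> (\<exists>u\<in>V-{a,b,c}. {b,w} = {u, p u})" using Mnot[of _ b] by blast
      moreover have "{b,w} \<noteq> {a,b}" "{b,w} \<noteq> {a,c}" "{b,w} \<noteq> {b,c}" using w t by (simp_all add: doubleton_eq_iff)
      ultimately show "h {b,w} = 0" using zero w(2) by metis
    qed
    also have "\<dots> = k" using t(5) hab hbc odd_half[OF k(1)] by simp
    finally show ?thesis .
  qed
  have sc: "(\<Sum>w\<in>?N c. h {c,w}) = k"
  proof -
    have "(\<Sum>w\<in>?N c. h {c,w}) = (\<Sum>w\<in>{a,b}. h {c,w})"
    proof (rule sum_nb[OF fin])
      show "{a,b} \<subseteq> ?N c" using t by (auto simp: insert_commute)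
    next
      fix w assume w: "w \<in> V" "w \<noteq> c" "w \<notin> {a,b}"
      have "\<not> (\<exists>u\<in>V-{a,b,c}. {c,w} = {u, p u})" using Mnot[of _ c] by blast
      moreover have "{c,w} \<noteq> {a,b}" "{c,w} \<noteq> {a,c}" "{c,w} \<noteq> {b,c}" using w t by (simp_all add: doubleton_eq_iff)
      ultimately show "h {c,w} = 0" using zero w(2) by metis
    qed
    also have "\<dots> = k" using t(4) hac hbc odd_half[OF k(1)] by simp
    finally show ?thesis .
  qed
  have sv: "(\<Sum>w\<in>?N v. h {v,w}) = k" if v: "v \<in> V - {a,b,c}" for v
  proof -
    have pv: "p v \<in> V - {a,b,c}" "p v \<noteq> v" "p (p v) = v" "{v, p v} \<notin> F" using pp v by (auto simp: partner_def)
    have "(\<Sum>w\<in>?N v. h {v,w}) = (\<Sum>w\<in>{p v}. h {v,w})"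
    proof (rule sum_nb[OF fin])
      show "{p v} \<subseteq> ?N v" using pv by auto
    next
      fix w assume w: "w \<in> V" "w \<noteq> v" "w \<notin> {p v}"
      have "\<not> (\<exists>u\<in>V-{a,b,c}. {v,w} = {u, p u})"
      proof
        assume "\<exists>u\<in>V-{a,b,c}. {v,w} = {u, p u}"
        then obtain u where u: "u \<in> V-{a,b,c}" "{v,w} = {u, p u}" by blast
        hence "(v = u \<and> w = p u) \<or> (v = p u \<and> w = u)" by (auto simp: doubleton_eq_iff)
        moreover have "p (p u) = u" using pp u(1) by (auto simp: partner_def)
        ultimately show False using w by auto
      qed
      moreover have "{v,w} \<noteq> {a,b}" "{v,w} \<noteq> {a,c}" "{v,w} \<noteq> {b,c}" using v by (auto simp: doubleton_eq_iff)
      ultimately show "h {v,w} = 0" using zero w(2) by metis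
    qed
    also have "\<dots> = h {v, p v}" by simp
    also have "\<dots> = k"
    proof -
      have "{v, p v} \<noteq> {a,b}" "{v, p v} \<noteq> {a,c}" "{v, p v} \<noteq> {b,c}" using v by (auto simp: doubleton_eq_iff)
      moreover have "\<exists>u\<in>V-{a,b,c}. {v, p v} = {u, p u}" using v by blast
      ultimately show ?thesis unfolding h_def by simp
    qed
    finally show ?thesis .
  qed
  have S: "(\<Sum>e\<in>incident (complete_edges V - F) v. h e) = (if v = a then k - 1 else k)" if v: "v \<in> V" for v
  proof -
    have "(\<Sum>e\<in>incident (complete_edges V - F) v. h e) = (\<Sum>w\<in>?N v. h {v,w})" by (rule sum_inc[OF v])
    also have "\<dots> = (if v = a then k - 1 else k)"
    proof (cases "v = a")
      case True thus ?thesis using sa by simp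
    next
      case va: False
      show ?thesis
      proof (cases "v = b")
        case True thus ?thesis using sb t(4) by simp
      next
        case vb: False
        show ?thesis
        proof (cases "v = c")
          case True thus ?thesis using sc t(5) by simp
        next
          case False
          hence "v \<in> V - {a,b,c}" using v va vb by simp
          thus ?thesis using sv va by simp
        qed
      qed
    qed
    finally show ?thesis .
  qed
  have kk: "(k-1) div 2 \<le> k" "(k+1) div 2 \<le> k" using k by auto
  have hle: "h e \<le> k" for e unfolding h_def using kk by (simp split: if_split)
  have "almost_perfect_int_matching k V (complete_edges V - F) h"
    unfolding almost_perfect_int_matching_def int_matching_def
  proof (intro conjI)
    show "\<forall>e\<in>complete_edges V - F. h e \<le> k" using hle by blast
    show "\<forall>v\<in>V. (\<Sum>e\<in>incident (complete_edges V - F) v. h e) \<le> k" using S by simp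
    have ka: "k - 1 \<noteq> k" using k by simp
    show "\<exists>!v'. v' \<in> V \<and> (\<Sum>e\<in>incident (complete_edges V - F) v'. h e) = k - 1"
    proof (rule ex1I[of _ a])
      show "a \<in> V \<and> (\<Sum>e\<in>incident (complete_edges V - F) a. h e) = k - 1" using S[OF t(1)] t(1) by simp
    next
      fix y assume "y \<in> V \<and> (\<Sum>e\<in>incident (complete_edges V - F) y. h e) = k - 1"
      thus "y = a" using S ka by (metis (full_types))
    qed
    show "\<forall>v\<in>V. (\<Sum>e\<in>incident (complete_edges V - F) v. h e) = k \<or> (\<Sum>e\<in>incident (complete_edges V - F) v. h e) = k - 1"
      using S by simp
  qed
  thus ?thesis by blast
qed




lemma props:
  assumes "perfect_int_matching k V G h \<or> almost_perfect_int_matching k V G h" "k \<ge> 1"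
  shows "\<forall>v\<in>V. (\<Sum>e\<in>incident G v. h e) = k \<or> (\<Sum>e\<in>incident G v. h e) = k - 1"
    "\<forall>x\<in>V. \<forall>y\<in>V. (\<Sum>e\<in>incident G x. h e) = k - 1 \<longrightarrow> (\<Sum>e\<in>incident G y. h e) = k - 1 \<longrightarrow> x = y"
  using assms unfolding perfect_int_matching_def almost_perfect_int_matching_def by auto

lemma props3:
  assumes "perfect_int_matching k V G h \<or> almost_perfect_int_matching k V G h"
  shows "\<forall>v\<in>V. (\<Sum>e\<in>incident G v. h e) \<le> k"
  using assms unfolding perfect_int_matching_def almost_perfect_int_matching_def int_matching_def by auto

lemma star_card:
  assumes "n \<ge> 2"
  shows "card {e\<in>complete_edges {0..<n}. (0::nat) \<in> e} = n - 1"
proof -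
  have "{e\<in>complete_edges {0..<n}. (0::nat) \<in> e} = (\<lambda>v. {0,v}) ` ({0..<n} - {0})"
  proof
    show "{e\<in>complete_edges {0..<n}. (0::nat) \<in> e} \<subseteq> (\<lambda>v. {0,v}) ` ({0..<n} - {0})"
    proof
      fix e assume "e \<in> {e\<in>complete_edges {0..<n}. (0::nat) \<in> e}"
      hence e: "e \<in> complete_edges {0..<n}" "0 \<in> e" by auto
      obtain w where "e = {0,w}" "w \<noteq> 0" "w \<in> {0..<n}" using ce_elem_with[OF e] by blast
      thus "e \<in> (\<lambda>v. {0,v}) ` ({0..<n} - {0})" by blast
    qed
  next
    show "(\<lambda>v. {0,v}) ` ({0..<n} - {0}) \<subseteq> {e\<in>complete_edges {0..<n}. (0::nat) \<in> e}"
      using assms by (auto intro!: ce_pair)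
  qed
  moreover have "inj_on (\<lambda>v. {0::nat,v}) ({0..<n} - {0})" by (auto simp: inj_on_def doubleton_eq_iff)
  ultimately have "card {e\<in>complete_edges {0..<n}. (0::nat) \<in> e} = card ({0..<n} - {0::nat})"
    by (simp add: card_image)
  also have "card ({0..<n} - {0::nat}) = n - 1" using assms by (simp add: card_Diff_singleton)
  finally show ?thesis .
qed

lemma star_precl:
  assumes "n \<ge> 2" "k \<ge> 3"
  shows "int_matching_preclusion_set k {0..<n} (complete_edges {0..<n}) {e\<in>complete_edges {0..<n}. (0::nat) \<in> e}"
proof -
  let ?G = "complete_edges {0..<n} - {e\<in>complete_edges {0..<n}. (0::nat) \<in> e}"
  have "incident ?G 0 = {}" by (auto simp: incident_def)
  hence s0: "(\<Sum>e\<in>incident ?G 0. h e) = 0" for h :: "nat set \<Rightarrow> nat" by simp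
  have z: "(0::nat) \<in> {0..<n}" using assms by simp
  have "\<not> (perfect_int_matching k {0..<n} ?G h \<or> almost_perfect_int_matching k {0..<n} ?G h)" for h
  proof
    assume "perfect_int_matching k {0..<n} ?G h \<or> almost_perfect_int_matching k {0..<n} ?G h"
    from props(1)[OF this] z s0[of h] assms show False by force
  qed
  thus ?thesis unfolding int_matching_preclusion_set_def by blast
qed

lemma n3_precl:
  assumes "k \<ge> 3"
  shows "int_matching_preclusion_set k {0..<3} (complete_edges {0..<3}) {{0::nat,2}}"
proof -
  let ?V = "{0..<3::nat}"
  let ?F = "{{0::nat,2}}"
  let ?G = "complete_edges ?V - ?F"
  have N0: "{w\<in>?V. w \<noteq> 0 \<and> {0,w} \<notin> ?F} = {1}" by (auto simp: doubleton_eq_iff)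
  have N1: "{w\<in>?V. w \<noteq> 1 \<and> {1,w} \<notin> ?F} = {0,2}" by (auto simp: doubleton_eq_iff)
  have N2: "{w\<in>?V. w \<noteq> 2 \<and> {2,w} \<notin> ?F} = {1}" by (auto simp: doubleton_eq_iff)
  have c: "{1::nat,0} = {0,1}" "{2::nat,1} = {1,2}" by auto
  have "\<not> (perfect_int_matching k ?V ?G h \<or> almost_perfect_int_matching k ?V ?G h)" for h
  proof
    assume a: "perfect_int_matching k ?V ?G h \<or> almost_perfect_int_matching k ?V ?G h"
    have s0: "(\<Sum>e\<in>incident ?G 0. h e) = h {0,1}" using sum_inc[where x=0 and V="?V" and F="?F" and h=h] N0 by simp
    have s1: "(\<Sum>e\<in>incident ?G 1. h e) = h {0,1} + h {1,2}" using sum_inc[where x=1 and V="?V" and F="?F" and h=h] N1 c by simp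
    have s2: "(\<Sum>e\<in>incident ?G 2. h e) = h {1,2}" using sum_inc[where x=2 and V="?V" and F="?F" and h=h] N2 c by simp
    have le: "(\<Sum>e\<in>incident ?G 1. h e) \<le> k"
      using props3[OF a] by simp
    have p1: "\<forall>v\<in>?V. (\<Sum>e\<in>incident ?G v. h e) = k \<or> (\<Sum>e\<in>incident ?G v. h e) = k - 1"
      using props(1)[OF a] assms by simp
    have p2: "\<forall>x\<in>?V. \<forall>y\<in>?V. (\<Sum>e\<in>incident ?G x. h e) = k - 1 \<longrightarrow> (\<Sum>e\<in>incident ?G y. h e) = k - 1 \<longrightarrow> x = y"
      using props(2)[OF a] assms by simp
    have "h {0,1} = k \<or> h {0,1} = k - 1" using p1[rule_format, of 0] s0 by simp
    moreover have "h {1,2} = k \<or> h {1,2} = k - 1" using p1[rule_format, of 2] s2 by simp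
    moreover have "\<not> (h {0,1} = k - 1 \<and> h {1,2} = k - 1)" using p2[rule_format, of 0 2] s0 s2 by auto
    ultimately show False using le s1 assms by auto
  qed
  moreover have "?F \<subseteq> complete_edges ?V" by (simp add: ce_pair)
  ultimately show ?thesis unfolding int_matching_preclusion_set_def by blast
qed

lemma arith3:
  fixes a b c k :: nat
  assumes "a = k \<or> a = k-1" "b = k \<or> b = k-1" "c = k \<or> c = k-1"
    "\<not>(a=k-1 \<and> b=k-1)" "\<not>(a=k-1 \<and> c=k-1)" "\<not>(b=k-1 \<and> c=k-1)" "k \<ge> 3" "a+b+c \<le> 2*k"
  shows False
  using assms by auto

lemma n5_precl:
  assumes "k \<ge> 3"
  shows "int_matching_preclusion_set k {0..<5} (complete_edges {0..<5}) {{0::nat,1},{0,2},{1,2}}"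
proof -
  let ?V = "{0..<5::nat}"
  let ?F = "{{0::nat,1},{0,2},{1,2}}"
  let ?G = "complete_edges ?V - ?F"
  have N0: "{w\<in>?V. w \<noteq> 0 \<and> {0,w} \<notin> ?F} = {3,4}" by (auto simp: doubleton_eq_iff)
  have N1: "{w\<in>?V. w \<noteq> 1 \<and> {1,w} \<notin> ?F} = {3,4}" by (auto simp: doubleton_eq_iff)
  have N2: "{w\<in>?V. w \<noteq> 2 \<and> {2,w} \<notin> ?F} = {3,4}" by (auto simp: doubleton_eq_iff)
  have N3: "{w\<in>?V. w \<noteq> 3 \<and> {3,w} \<notin> ?F} = {0,1,2,4}" by (auto simp: doubleton_eq_iff)
  have N4: "{w\<in>?V. w \<noteq> 4 \<and> {4,w} \<notin> ?F} = {0,1,2,3}" by (auto simp: doubleton_eq_iff)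
  have c: "{3::nat,0} = {0,3}" "{3::nat,1} = {1,3}" "{3::nat,2} = {2,3}" "{4::nat,0} = {0,4}"
    "{4::nat,1} = {1,4}" "{4::nat,2} = {2,4}" "{4::nat,3} = {3,4}" by auto
  have "\<not> (perfect_int_matching k ?V ?G h \<or> almost_perfect_int_matching k ?V ?G h)" for h
  proof
    assume a: "perfect_int_matching k ?V ?G h \<or> almost_perfect_int_matching k ?V ?G h"
    have s0: "(\<Sum>e\<in>incident ?G 0. h e) = h {0,3} + h {0,4}"
      using sum_inc[where x=0 and V="?V" and F="?F" and h=h] N0 by simp
    have s1: "(\<Sum>e\<in>incident ?G 1. h e) = h {1,3} + h {1,4}"
      using sum_inc[where x=1 and V="?V" and F="?F" and h=h] N1 by simp
    have s2: "(\<Sum>e\<in>incident ?G 2. h e) = h {2,3} + h {2,4}"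
      using sum_inc[where x=2 and V="?V" and F="?F" and h=h] N2 by simp
    have s3: "(\<Sum>e\<in>incident ?G 3. h e) = h {0,3} + (h {1,3} + (h {2,3} + h {3,4}))"
      using sum_inc[where x=3 and V="?V" and F="?F" and h=h] N3 c by simp
    have s4: "(\<Sum>e\<in>incident ?G 4. h e) = h {0,4} + (h {1,4} + (h {2,4} + h {3,4}))"
      using sum_inc[where x=4 and V="?V" and F="?F" and h=h] N4 c by simp
    have le3: "(\<Sum>e\<in>incident ?G 3. h e) \<le> k" using props3[OF a] by simp
    have le4: "(\<Sum>e\<in>incident ?G 4. h e) \<le> k" using props3[OF a] by simp
    have p1: "\<forall>v\<in>?V. (\<Sum>e\<in>incident ?G v. h e) = k \<or> (\<Sum>e\<in>incident ?G v. h e) = k - 1"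
      using props(1)[OF a] assms by simp
    have p2: "\<forall>x\<in>?V. \<forall>y\<in>?V. (\<Sum>e\<in>incident ?G x. h e) = k - 1 \<longrightarrow> (\<Sum>e\<in>incident ?G y. h e) = k - 1 \<longrightarrow> x = y"
      using props(2)[OF a] assms by simp
    have f0: "h {0,3} + h {0,4} = k \<or> h {0,3} + h {0,4} = k - 1" using p1[rule_format, of 0] s0 by simp
    have f1: "h {1,3} + h {1,4} = k \<or> h {1,3} + h {1,4} = k - 1" using p1[rule_format, of 1] s1 by simp
    have f2: "h {2,3} + h {2,4} = k \<or> h {2,3} + h {2,4} = k - 1" using p1[rule_format, of 2] s2 by simp
    have g01: "\<not> (h {0,3} + h {0,4} = k - 1 \<and> h {1,3} + h {1,4} = k - 1)" using p2[rule_format, of 0 1] s0 s1 by auto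
    have g02: "\<not> (h {0,3} + h {0,4} = k - 1 \<and> h {2,3} + h {2,4} = k - 1)" using p2[rule_format, of 0 2] s0 s2 by auto
    have g12: "\<not> (h {1,3} + h {1,4} = k - 1 \<and> h {2,3} + h {2,4} = k - 1)" using p2[rule_format, of 1 2] s1 s2 by auto
    have "(h {0,3} + h {0,4}) + (h {1,3} + h {1,4}) + (h {2,3} + h {2,4}) \<le> 2 * k"
      using le3 le4 s3 s4 by linarith
    thus False using arith3[OF f0 f1 f2 g01 g02 g12 assms] by blast
  qed
  moreover have "?F \<subseteq> complete_edges ?V" by (simp add: ce_pair)
  ultimately show ?thesis unfolding int_matching_preclusion_set_def by blast
qed

theorem theorem3p7:
  fixes k n :: nat
  assumes "odd k" and "k \<ge> 3" and "n \<ge> 2"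
  shows "mp k {0..<n} (complete_edges {0..<n}) = (if n \<in> {3, 5} then n - 2 else n - 1)"
proof -
  let ?V = "{0..<n::nat}"
  let ?E = "complete_edges ?V"
  define t where "t = (if n \<in> {3, 5} then n - 2 else n - 1)"
  have fin: "finite ?V" by simp
  have cV: "card ?V = n" by simp
  have lb: "t \<le> card F" if P: "int_matching_preclusion_set k ?V ?E F" for F
  proof (rule ccontr)
    assume "\<not> t \<le> card F"
    hence lt: "card F < t" by simp
    have sub: "F \<subseteq> ?E" and np: "\<not> (\<exists>h. perfect_int_matching k ?V (?E - F) h)"
      and na: "\<not> (\<exists>h. almost_perfect_int_matching k ?V (?E - F) h)"
      using P unfolding int_matching_preclusion_set_def by blast+
    have FF: "F \<inter> ?E = F" using sub by blast
    show False
    proof (cases "even n")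
      case True
      hence "n \<noteq> 3" "n \<noteq> 5" by auto
      hence "card F + 2 \<le> n" using lt assms(3) unfolding t_def by auto
      hence h1: "card (F \<inter> ?E) + 2 \<le> card ?V \<or> ?V = {}" using FF cV by simp
      have h2: "even (card ?V)" using True cV by simp
      obtain p where "partner ?V F p" using pm[OF fin h2 h1] by blast
      then obtain h where "perfect_int_matching k ?V (?E - F) h" using perfect_from_partner[OF fin] by blast
      thus False using np by blast
    next
      case odd: False
      have h2: "odd (card ?V)" using odd cV by simp
      have "tri_pm ?V F"
      proof (cases "n \<in> {3,5}")
        case True
        hence "card F + 3 \<le> n" using lt unfolding t_def by auto
        hence "card (F \<inter> ?E) + 3 \<le> card ?V" using FF cV by simp
        thus ?thesis by (rule tri[OF fin h2])
      next
        case False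
        hence "n \<noteq> 3" "n \<noteq> 5" by auto
        hence n7: "card ?V \<ge> 7" using odd assms(3) cV by presburger
        have "card F + 2 \<le> n" using lt False assms(3) unfolding t_def by auto
        hence "card (F \<inter> ?E) + 2 \<le> card ?V" using FF cV by simp
        thus ?thesis by (rule tri7[OF fin h2 n7])
      qed
      then obtain h where "almost_perfect_int_matching k ?V (?E - F) h"
        using almost_from_tri[OF fin _ assms(1,2)] by blast
      thus False using na by blast
    qed
  qed
  have ub: "\<exists>F. int_matching_preclusion_set k ?V ?E F \<and> card F = t"
  proof (cases "n = 3")
    case True
    have "int_matching_preclusion_set k ?V ?E {{0,2}}" using n3_precl[OF assms(2)] True by simp
    moreover have "card {{0::nat,2}} = t" using True unfolding t_def by simp
    ultimately show ?thesis by blast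
  next
    case n3: False
    show ?thesis
    proof (cases "n = 5")
      case True
      have "int_matching_preclusion_set k ?V ?E {{0,1},{0,2},{1,2}}" using n5_precl[OF assms(2)] True by simp
      moreover have "card {{0::nat,1},{0,2},{1,2}} = t" using True unfolding t_def by (simp add: doubleton_eq_iff)
      ultimately show ?thesis by blast
    next
      case False
      have "t = n - 1" using n3 False unfolding t_def by simp
      thus ?thesis using star_precl[OF assms(3,2)] star_card[OF assms(3)] by metis
    qed
  qed
  show ?thesis unfolding mp_def t_def[symmetric]
  proof (rule Least_equality)
    show "\<exists>F. int_matching_preclusion_set k ?V ?E F \<and> card F = t" by (rule ub)
  next
    fix y assume "\<exists>F. int_matching_preclusion_set k ?V ?E F \<and> card F = y"
    then obtain F where "int_matching_preclusion_set k ?V ?E F" "card F = y" by blast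
    thus "t \<le> y" using lb by blast
  qed
qed



end
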